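(* Fix $r>0$ and let $s(\ell)=\sinh^3\ell$, $s^{(-1)}$ its primitive vanishing at $0$ and $s^{(-2)}$ the primitive of $s^{(-1)}$ vanishing at $0$. Define, for $\ell\in[0,+\infty)$ and $\alpha,\beta\in[0,\pi/2)$, \[g(\ell,\alpha,\beta) =\frac43 \ell - \frac{s(\ell)}{9\tanh^2(r) \cos\alpha\cos\beta} +\frac{s^{(-1)}(\ell)}{3\tanh r}\left(\frac1{\cos\alpha}+\frac1{\cos\beta}\right) -s^{(-2)}(\ell),\] and $f(\alpha,\beta)=\sup_\ell g(\ell,\alpha,\beta)$. Then: (1) for each fixed $\alpha$, the maximum of $\ell\mapsto g(\ell,\alpha,\alpha)$ is attained at $\ell=2\operatorname{arctanh}(\tanh r\cos\alpha)$ and only there; (2) for all $\alpha,\beta$, $f(\alpha,\beta)\le \frac12\left(f(\alpha,\alpha)+f(\beta,\beta)\right)$, with equality only for $\alpha=\beta$. *)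

theory Defs
  imports "HOL-Analysis.Analysis"
begin

definition s :: "real \<Rightarrow> real" where
  "s l = sinh l ^ 3"

definition s1 :: "real \<Rightarrow> real" where
  "s1 l = integral {0..l} s"

definition s2 :: "real \<Rightarrow> real" where
  "s2 l = integral {0..l} s1"

definition g :: "real \<Rightarrow> real \<Rightarrow> real \<Rightarrow> real \<Rightarrow> real" where
  "g r l \<alpha> \<beta> = 4/3 * l - s l / (9 * (tanh r)^2 * cos \<alpha> * cos \<beta>)
     + s1 l / (3 * tanh r) * (1 / cos \<alpha> + 1 / cos \<beta>) - s2 l"

definition f :: "real \<Rightarrow> real \<Rightarrow> real \<Rightarrow> real" where
  "f r \<alpha> \<beta> = (SUP l\<in>{0..}. g r l \<alpha> \<beta>)"

end

theory Submission
  imports Defs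
begin


definition A :: "real \<Rightarrow> real" where
  "A x = 4/3 * artanh x + 4*x/(3*(1-x^2)) - 8*x^3/(9*(1-x^2)^3)"
definition B :: "real \<Rightarrow> real" where
  "B x = 4*x^4*(3-x^2)/(9*(1-x^2)^3)"
definition C :: "real \<Rightarrow> real" where
  "C x = 8*x^3/(9*(1-x^2)^3)"
definition Psi :: "real \<Rightarrow> real" where
  "Psi p = 4/3*artanh p + 4*p/(9*(1-p^2))"

lemma sq_lt1: "\<bar>x::real\<bar> < 1 \<Longrightarrow> 1 - x^2 \<noteq> 0"
  by (metis abs_square_less_1 less_irrefl right_minus_eq)

lemma A_deriv: assumes "\<bar>x\<bar> < 1"
  shows "(A has_real_derivative (8*(1-3*x^2)/(3*(1-x^2)^4))) (at x within S)"
proof -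
  have h: "1 - x^2 \<noteq> 0" using sq_lt1 assms by blast
  obtain w where hw: "w = 1 - x^2" by blast
  show ?thesis
    unfolding A_def [abs_def]
    apply (rule derivative_eq_intros refl | (use assms h in simp; fail))+
    using h apply (simp add: hw[symmetric])
    apply (simp add: field_simps)
    using hw by algebra
qed

lemma B_deriv: assumes "\<bar>x\<bar> < 1"
  shows "(B has_real_derivative (16*x^3/(3*(1-x^2)^4))) (at x within S)"
proof -
  have h: "1 - x^2 \<noteq> 0" using sq_lt1 assms by blast
  obtain w where hw: "w = 1 - x^2" by blast
  show ?thesis
    unfolding B_def [abs_def]
    apply (rule derivative_eq_intros refl | (use assms h in simp; fail))+
    using h apply (simp add: hw[symmetric])
    apply (simp add: field_simps)
    using hw by algebra
qed

lemma C_deriv: assumes "\<bar>x\<bar> < 1"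
  shows "(C has_real_derivative (8*x^2*(1+x^2)/(3*(1-x^2)^4))) (at x within S)"
proof -
  have h: "1 - x^2 \<noteq> 0" using sq_lt1 assms by blast
  obtain w where hw: "w = 1 - x^2" by blast
  show ?thesis
    unfolding C_def [abs_def]
    apply (rule derivative_eq_intros refl | (use assms h in simp; fail))+
    using h apply (simp add: hw[symmetric])
    apply (simp add: field_simps)
    using hw by algebra
qed

lemma Psi_deriv: assumes "\<bar>x\<bar> < 1"
  shows "(Psi has_real_derivative (8*(2-x^2)/(9*(1-x^2)^2))) (at x within S)"
proof -
  have h: "1 - x^2 \<noteq> 0" using sq_lt1 assms by blast
  obtain w where hw: "w = 1 - x^2" by blast
  show ?thesis
    unfolding Psi_def [abs_def]
    apply (rule derivative_eq_intros refl | (use assms h in simp; fail))+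
    using h apply (simp add: hw[symmetric])
    apply (simp add: field_simps)
    using hw by algebra
qed

definition Gx :: "real \<Rightarrow> real \<Rightarrow> real \<Rightarrow> real" where
  "Gx x p q = A x + (1/p + 1/q) * B x - C x / (p*q)"
definition Rr :: "real \<Rightarrow> real \<Rightarrow> real \<Rightarrow> real" where
  "Rr x p q = p*q*(1-3*x^2) + 2*(p+q)*x^3 - x^2 - x^4"
definition Nn :: "real \<Rightarrow> real \<Rightarrow> real" where
  "Nn t p = t^2*(1+t^2-2*p*t)"
definition Dd :: "real \<Rightarrow> real \<Rightarrow> real" where
  "Dd t p = p*(1-3*t^2)+2*t^3"
definition Qf :: "real \<Rightarrow> real \<Rightarrow> real" where
  "Qf t p = Nn t p / Dd t p"
definition hh :: "real \<Rightarrow> real \<Rightarrow> real" where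
  "hh q t = q^3 + t*q^2 + t^2*q - 2*q - t^3"

lemma Gx_deriv: assumes "\<bar>x\<bar> < 1" "p \<noteq> 0" "q \<noteq> 0"
  shows "((\<lambda>x. Gx x p q) has_real_derivative (8*Rr x p q/(3*p*q*(1-x^2)^4))) (at x)"
proof -
  have h: "1 - x^2 \<noteq> 0" using sq_lt1 assms by blast
  have "((\<lambda>x. A x + (1/p + 1/q) * B x - C x / (p*q)) has_real_derivative
     (8*(1-3*x^2)/(3*(1-x^2)^4) + (1/p + 1/q) * (16*x^3/(3*(1-x^2)^4)) - (8*x^2*(1+x^2)/(3*(1-x^2)^4))/(p*q))) (at x)"
    by (intro DERIV_diff DERIV_add DERIV_cmult DERIV_cdivide A_deriv B_deriv C_deriv assms)
  moreover have "8*(1-3*x^2)/(3*(1-x^2)^4) + (1/p + 1/q) * (16*x^3/(3*(1-x^2)^4)) - (8*x^2*(1+x^2)/(3*(1-x^2)^4))/(p*q)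
      = 8*Rr x p q/(3*p*q*(1-x^2)^4)"
    unfolding Rr_def using h assms(2,3) by (simp add: field_simps)
  ultimately show ?thesis unfolding Gx_def by simp
qed

lemma Rr_split: "Rr x p q = x*(1-x^2)*(p-x) + (q-x)*Dd x p"
  unfolding Rr_def Dd_def by algebra

lemma Rr_alt: "Rr t p q = q * Dd t p - Nn t p"
  unfolding Rr_def Dd_def Nn_def by algebra

lemma Rr_Q: "Dd t p \<noteq> 0 \<Longrightarrow> Rr t p (Qf t p) = 0"
  unfolding Rr_alt Qf_def by simp

lemma Dd_eq: "Dd t p = p*(1-p^2) + (t-p)^2*(2*t+p)"
  unfolding Dd_def by algebra

lemma Dd_pos: assumes "0 < p" "p < 1" "0 \<le> t" shows "Dd t p > 0"
proof -
  have "p*p < 1*1" using assms by (intro mult_strict_mono) auto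
  then have "p*(1-p^2) > 0" using assms by (simp add: power2_eq_square)
  moreover have "(t-p)^2*(2*t+p) \<ge> 0" using assms by simp
  ultimately show ?thesis unfolding Dd_eq by linarith
qed

lemma Qf_self: assumes "0 < p" "p < 1" shows "Qf p p = p"
proof -
  have "Dd p p > 0" using Dd_pos assms by simp
  moreover have "Nn p p = p * Dd p p" unfolding Nn_def Dd_def by algebra
  ultimately show ?thesis unfolding Qf_def by simp
qed

lemma hh_neg: assumes "0 < q" "q < 1" "0 < t" "t < 1" shows "hh q t < 0"
proof -
  have e: "hh q t = 0 - t^3*(1-q) - q*(1-t)*(1-t^2) + q*(q-1)*(q+1+t)"
    unfolding hh_def by algebra
  have "t*t < 1*1" using assms by (intro mult_strict_mono) auto
  then have "1-t^2 > 0" by (simp add: power2_eq_square)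
  then have "q*(1-t)*(1-t^2) > 0" using assms by simp
  moreover have "t^3*(1-q) > 0" using assms by simp
  moreover have "q*(q-1)*(q+1+t) < 0"
  proof -
    have "q*(q+1+t) > 0" using assms by simp
    moreover have "q - 1 < 0" using assms by simp
    ultimately have "(q-1)*(q*(q+1+t)) < 0" by (simp add: mult_neg_pos)
    then show ?thesis by (simp add: algebra_simps)
  qed
  ultimately show ?thesis unfolding e by linarith
qed

lemma diag_factor: "Rr x p p = (p-x)*(x^3 - 3*x^2*p + x + p)"
  unfolding Rr_def by algebra

lemma diag_pos: fixes x p :: real assumes "0 \<le> x" "x < 1" "0 < p" "p < 1" shows "x^3 - 3*x^2*p + x + p > 0"
proof (cases "1 - 3*x^2 \<ge> 0")
  case True
  have "p*(1-3*x^2) \<ge> 0" using True assms by simp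
  moreover have "x^3 \<ge> 0" using assms by simp
  moreover have "p*(1-3*x^2) = p - 3*x^2*p" by algebra
  ultimately have "x^3 - 3*x^2*p + x + p \<ge> x" by linarith
  show ?thesis
  proof (cases "x = 0")
    case True then show ?thesis using assms by simp
  next
    case False then show ?thesis using assms \<open>x^3 - 3*x^2*p + x + p \<ge> x\<close> by simp
  qed
next
  case False
  have "p*(1-3*x^2) > 1*(1-3*x^2)" using False assms by (intro mult_strict_right_mono_neg) auto
  moreover have "1 + x - 3*x^2 + x^3 = (1-x)*((1-x^2)+2*x)" by algebra
  moreover have "x*x \<le> 1*1" using assms by (intro mult_mono) auto
  then have "(1-x)*((1-x^2)+2*x) \<ge> 0" using assms by (intro mult_nonneg_nonneg) (auto simp: power2_eq_square)
  ultimately show ?thesis by (simp add: algebra_simps)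
qed

definition psi :: "real \<Rightarrow> real \<Rightarrow> real" where
  "psi t p = p + 3*p*t^2 - 3*t*p^2 - t^3"

lemma Qf_deriv: assumes "Dd t p \<noteq> 0"
  shows "((\<lambda>t. Qf t p) has_real_derivative (2*t*(1-t^2)*psi t p / (Dd t p)^2)) (at t)"
proof -
  have "((\<lambda>t. Qf t p) has_real_derivative
    ((2*t+4*t^3-6*p*t^2) * Dd t p - Nn t p * (-6*p*t+6*t^2)) / (Dd t p * Dd t p)) (at t)"
    unfolding Qf_def
  proof (rule DERIV_divide)
    show "((\<lambda>t. Nn t p) has_real_derivative (2*t+4*t^3-6*p*t^2)) (at t)"
      unfolding Nn_def by (rule derivative_eq_intros refl | simp add: algebra_simps power2_eq_square power3_eq_cube)+
    show "((\<lambda>t. Dd t p) has_real_derivative (-6*p*t+6*t^2)) (at t)"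
      unfolding Dd_def by (rule derivative_eq_intros refl | simp add: algebra_simps power2_eq_square power3_eq_cube)+
  qed (use assms in simp)
  moreover have "(2*t+4*t^3-6*p*t^2) * Dd t p - Nn t p * (-6*p*t+6*t^2) = 2*t*(1-t^2)*psi t p"
    unfolding Dd_def Nn_def psi_def by algebra
  ultimately show ?thesis by (simp add: power2_eq_square)
qed

lemma psi_pos: assumes "0 < p" "p < 1" "0 < t" "t < 1" "t^2 < p*(1+2*t)"
  shows "psi t p > 0"
proof -
  define K where "K = 1+2*t-t^2"
  define e where "e = p*(1+2*t) - t^2"
  define f where "f = 1 - p"
  have id: "K*(1+2*t)*psi t p = 3*t*K*e*f + (1+2*t)*(1-t)^3*e + t^2*(1+t)*(1-t^2)*f"
    unfolding K_def e_def f_def psi_def by algebra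
  have "t*t < 1*1" using assms by (intro mult_strict_mono) auto
  then have w: "1 - t^2 > 0" by (simp add: power2_eq_square)
  have Kp: "K > 0" unfolding K_def using w assms by simp
  have ep: "e > 0" "f > 0" unfolding e_def f_def using assms by auto
  have "3*t*K*e*f > 0" using Kp ep assms by simp
  moreover have "(1+2*t)*(1-t)^3*e > 0" using ep assms by simp
  moreover have "t^2*(1+t)*(1-t^2)*f > 0" using ep assms w by simp
  ultimately have "K*(1+2*t)*psi t p > 0" unfolding id by linarith
  moreover have "K*(1+2*t) > 0" using Kp assms by simp
  ultimately show ?thesis by (simp add: zero_less_mult_iff)
qed

definition Tt :: "real \<Rightarrow> real \<Rightarrow> real \<Rightarrow> real" where
  "Tt t p q = t^3*(2-3*p*t+p*t^3)*(1-q^2)^2 - p*q^2*(2-q^2)*(1-t^2)^3"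

lemma cancel_u: "(u::real) \<noteq> 0 \<Longrightarrow> a*u/(b*u) = a/b" by simp

lemma Tt_id: "Dd t q * (Tt t p q + (p-t)*t*(1-t^2)*hh q t) =
   (t^3*(-3*t+t^3)*(1-q^2)^2 - q^2*(2-q^2)*(1-t^2)^3 + t*(1-t^2)*hh q t) * Rr t p q"
  unfolding Dd_def Tt_def hh_def Rr_def by algebra

lemma Tt_crit: assumes "0 < q" "q < 1" "0 \<le> t" "Rr t p q = 0"
  shows "Tt t p q = (p-t)*t*(1-t^2)*(- hh q t)"
proof -
  have "Dd t q > 0" using Dd_pos assms by blast
  then show ?thesis using Tt_id[of t q p] assms(4) by simp
qed

lemma M_deriv: assumes "0 < p" "p < 1" "0 < t" "t < 1" "q = Qf t p" "0 < q" "q < 1"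
  shows "((\<lambda>t. Gx t p (Qf t p) - (Psi p + Psi (Qf t p))/2) has_real_derivative
    (2*t*(1-t^2)*psi t p/(Dd t p)^2) * (4*(p-t)*t*(-hh q t)/(9*p*q^2*(1-t^2)^2*(1-q^2)^2))) (at t)"
proof -
  define qd where "qd = 2*t*(1-t^2)*psi t p/(Dd t p)^2"
  have Ddp: "Dd t p > 0" using Dd_pos assms by simp
  have at: "\<bar>t\<bar> < 1" "\<bar>q\<bar> < 1" using assms by auto
  have w: "1 - t^2 \<noteq> 0" "1 - q^2 \<noteq> 0" using sq_lt1 at by blast+
  have Qd: "((\<lambda>t. Qf t p) has_real_derivative qd) (at t)"
    unfolding qd_def using Qf_deriv Ddp by simp
  have fe: "(\<lambda>t. Gx t p (Qf t p) - (Psi p + Psi (Qf t p))/2) =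
     (\<lambda>t. A t + (1/p)*B t + B t/Qf t p - C t/(p*Qf t p) - (Psi p + Psi (Qf t p))/2)"
    by (rule ext) (simp add: Gx_def algebra_simps)
  define a' where "a' = 8*(1-3*t^2)/(3*(1-t^2)^4)"
  define b' where "b' = 16*t^3/(3*(1-t^2)^4)"
  define c' where "c' = 8*t^2*(1+t^2)/(3*(1-t^2)^4)"
  define s' where "s' = 8*(2-q^2)/(9*(1-q^2)^2)"
  have dA: "(A has_real_derivative a') (at t)" unfolding a'_def by (rule A_deriv[OF at(1)])
  have dB: "(B has_real_derivative b') (at t)" unfolding b'_def by (rule B_deriv[OF at(1)])
  have dC: "(C has_real_derivative c') (at t)" unfolding c'_def by (rule C_deriv[OF at(1)])
  have dP: "(Psi has_real_derivative s') (at (Qf t p))" unfolding s'_def assms(5)[symmetric] by (rule Psi_deriv[OF at(2)])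
  have d1: "((\<lambda>t. B t / Qf t p) has_real_derivative (b' * q - B t * qd)/(q*q)) (at t)"
    using DERIV_divide[OF dB Qd] assms by simp
  have dpQ: "((\<lambda>t. p * Qf t p) has_real_derivative p * qd) (at t)" by (rule DERIV_cmult[OF Qd])
  have d2: "((\<lambda>t. C t / (p * Qf t p)) has_real_derivative (c' * (p*q) - C t * (p*qd))/((p*q)*(p*q))) (at t)"
    using DERIV_divide[OF dC dpQ] assms by simp
  have d3: "((\<lambda>t. (Psi p + Psi (Qf t p))/2) has_real_derivative (0 + s' * qd)/2) (at t)"
    by (intro DERIV_cdivide DERIV_add DERIV_const DERIV_chain2[OF dP Qd])
  have raw: "((\<lambda>t. Gx t p (Qf t p) - (Psi p + Psi (Qf t p))/2) has_real_derivative
      a' + (1/p)*b' + (b' * q - B t * qd)/(q*q) - (c' * (p*q) - C t * (p*qd))/((p*q)*(p*q)) - (0 + s' * qd)/2) (at t)"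
    unfolding fe by (intro DERIV_diff DERIV_add DERIV_cmult dA dB d1 d2 d3)
  have pq: "p \<noteq> 0" "q \<noteq> 0" using assms by auto
  have e0: "a' + (1/p)*b' + (b' * q - B t * qd)/(q*q) - (c' * (p*q) - C t * (p*qd))/((p*q)*(p*q)) - (0 + s' * qd)/2
      = (a' + (1/p)*b' + b'/q - c'/(p*q)) + qd*((C t/p - B t)/q^2 - s'/2)"
    using pq by (simp add: field_simps power2_eq_square)
  have ei: "a' + (1/p)*b' + b'/q - c'/(p*q) = 8*Rr t p q/(3*p*q*(1-t^2)^4)"
    unfolding a'_def b'_def c'_def Rr_def using pq w by (simp add: field_simps)
  have eii: "(C t/p - B t)/q^2 - s'/2 = 4*Tt t p q/(9*p*q^2*(1-t^2)^3*(1-q^2)^2)"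
  proof -
    obtain u where hu: "u = 1 - t^2" by blast
    obtain z where hz: "z = 1 - q^2" by blast
    have "u \<noteq> 0" "z \<noteq> 0" using w hu hz by auto
    then show ?thesis
      unfolding s'_def B_def C_def Tt_def hu[symmetric] hz[symmetric]
      using pq by (simp add: field_simps power2_eq_square power3_eq_cube power4_eq_xxxx)
  qed
  have e1: "a' + (1/p)*b' + (b' * q - B t * qd)/(q*q) - (c' * (p*q) - C t * (p*qd))/((p*q)*(p*q)) - (0 + s' * qd)/2
      = 8*Rr t p q/(3*p*q*(1-t^2)^4) + qd * (4*Tt t p q/(9*p*q^2*(1-t^2)^3*(1-q^2)^2))"
    unfolding e0 ei eii ..
  have R0: "Rr t p q = 0" using Rr_Q Ddp assms(5) by simp
  have T0: "Tt t p q = (p-t)*t*(1-t^2)*(- hh q t)"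
    using Tt_crit assms R0 by simp
  have x1: "4*((p-t)*t*(1-t^2)*(- hh q t))/(9*p*q^2*(1-t^2)^3*(1-q^2)^2)
     = (4*(p-t)*t*(-hh q t)) * (1-t^2) /((9*p*q^2*(1-t^2)^2*(1-q^2)^2) * (1-t^2))"
    by (simp only: power3_eq_cube power2_eq_square mult_ac)
  have "a' + (1/p)*b' + (b' * q - B t * qd)/(q*q) - (c' * (p*q) - C t * (p*qd))/((p*q)*(p*q)) - (0 + s' * qd)/2
     = qd * ((4*(p-t)*t*(-hh q t)) * (1-t^2) /((9*p*q^2*(1-t^2)^2*(1-q^2)^2) * (1-t^2)))"
    unfolding e1 R0 T0 x1 by simp
  also have "\<dots> = qd * (4*(p-t)*t*(-hh q t)/(9*p*q^2*(1-t^2)^2*(1-q^2)^2))"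
    using w cancel_u by simp
  finally have "a' + (1/p)*b' + (b' * q - B t * qd)/(q*q) - (c' * (p*q) - C t * (p*qd))/((p*q)*(p*q)) - (0 + s' * qd)/2
     = qd * (4*(p-t)*t*(-hh q t)/(9*p*q^2*(1-t^2)^2*(1-q^2)^2))" .
  then show ?thesis using raw unfolding qd_def by simp
qed

lemma Gx_diag: assumes "0 < p" "p < 1" shows "Gx p p p = Psi p"
proof -
  have "p*p < 1*1" using assms by (intro mult_strict_mono) auto
  then have w: "1 - p^2 \<noteq> 0" by (simp add: power2_eq_square)
  obtain u where hu: "u = 1 - p^2" by blast
  have "u \<noteq> 0" using w hu by simp
  then show ?thesis unfolding Gx_def A_def B_def C_def Psi_def hu[symmetric]
    using assms apply (simp add: field_simps)
    using hu by algebra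
qed

lemma adm: assumes "0 < p" "p < 1" "0 < t" "t < 1" "t^2 < p*(1+2*t)"
  shows "0 < Qf t p" "Qf t p < 1" "Dd t p > 0" "psi t p > 0"
proof -
  show Dp: "Dd t p > 0" using Dd_pos assms by simp
  show "psi t p > 0" using psi_pos assms by simp
  have "1 + t^2 - 2*p*t = (1-t)^2 + 2*t*(1-p)" by algebra
  moreover have "(1-t)^2 + 2*t*(1-p) > 0" using assms by (simp add: add_nonneg_pos)
  ultimately have "Nn t p > 0" unfolding Nn_def using assms by simp
  then show "0 < Qf t p" unfolding Qf_def using Dp by simp
  have "Dd t p - Nn t p = (1-t)^2*(p+2*p*t-t^2)" unfolding Dd_def Nn_def by algebra
  moreover have "(1-t)^2*(p+2*p*t-t^2) > 0"
  proof (rule mult_pos_pos)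
    show "(1-t)^2 > 0" using assms by simp
    have "p*(1+2*t) = p+2*p*t" by algebra
    then show "p+2*p*t-t^2 > 0" using assms by linarith
  qed
  ultimately have "Nn t p < Dd t p" by simp
  then show "Qf t p < 1" unfolding Qf_def using Dp by simp
qed

lemma M_deriv_sign: assumes "0 < p" "p < 1" "0 < t" "t < 1" "t^2 < p*(1+2*t)"
  shows "\<exists>d. ((\<lambda>t. Gx t p (Qf t p) - (Psi p + Psi (Qf t p))/2) has_real_derivative d) (at t)
     \<and> (t < p \<longrightarrow> d > 0) \<and> (p < t \<longrightarrow> d < 0)"
proof -
  define q where "q = Qf t p"
  note ad = adm[OF assms]
  have D: "((\<lambda>t. Gx t p (Qf t p) - (Psi p + Psi (Qf t p))/2) has_real_derivative
    (2*t*(1-t^2)*psi t p/(Dd t p)^2) * (4*(p-t)*t*(-hh q t)/(9*p*q^2*(1-t^2)^2*(1-q^2)^2))) (at t)"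
    by (rule M_deriv) (use assms ad in \<open>auto simp: q_def\<close>)
  have "t*t < 1*1" using assms by (intro mult_strict_mono) auto
  then have w: "1 - t^2 > 0" by (simp add: power2_eq_square)
  have "q*q < 1*1" using ad q_def by (intro mult_strict_mono) auto
  then have z: "1 - q^2 > 0" by (simp add: power2_eq_square)
  have hn: "- hh q t > 0" using hh_neg[of q t] ad assms q_def by simp
  have qd: "2*t*(1-t^2)*psi t p/(Dd t p)^2 > 0" using w ad assms by simp
  have den: "9*p*q^2*(1-t^2)^2*(1-q^2)^2 > 0" using w z ad assms q_def by simp
  show ?thesis
  proof (intro exI conjI impI)
    show "((\<lambda>t. Gx t p (Qf t p) - (Psi p + Psi (Qf t p))/2) has_real_derivative
    (2*t*(1-t^2)*psi t p/(Dd t p)^2) * (4*(p-t)*t*(-hh q t)/(9*p*q^2*(1-t^2)^2*(1-q^2)^2))) (at t)" by (rule D)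
  next
    assume "t < p"
    then have ps: "4*(p-t)*t*(-hh q t) > 0" using hn assms by (intro mult_pos_pos) auto
    show "(2*t*(1-t^2)*psi t p/(Dd t p)^2) * (4*(p-t)*t*(-hh q t)/(9*p*q^2*(1-t^2)^2*(1-q^2)^2)) > 0"
      by (rule mult_pos_pos[OF qd divide_pos_pos[OF ps den]])
  next
    assume "p < t"
    then have "4*(p-t) < 0" by simp
    then have "4*(p-t)*t < 0" using assms by (simp add: mult_neg_pos)
    then have ng: "4*(p-t)*t*(-hh q t) < 0" by (rule mult_neg_pos[OF _ hn])
    show "(2*t*(1-t^2)*psi t p/(Dd t p)^2) * (4*(p-t)*t*(-hh q t)/(9*p*q^2*(1-t^2)^2*(1-q^2)^2)) < 0"
      by (rule mult_pos_neg[OF qd divide_neg_pos[OF ng den]])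
  qed
qed

lemma curve: assumes "0 < p" "p < 1" "0 < q" "q < 1" "0 < xs" "xs < 1" "Rr xs p q = 0" "xs \<noteq> p"
  shows "Gx xs p q < (Psi p + Psi q)/2"
proof -
  define M where "M = (\<lambda>t. Gx t p (Qf t p) - (Psi p + Psi (Qf t p))/2)"
  have Ddx: "Dd xs p > 0" using Dd_pos assms by simp
  have Qx: "Qf xs p = q" using assms(7) Ddx unfolding Rr_alt Qf_def by (simp add: field_simps)
  have Mp: "M p = 0" unfolding M_def using Qf_self[OF assms(1,2)] Gx_diag[OF assms(1,2)] by simp
  have Mx: "M xs = Gx xs p q - (Psi p + Psi q)/2" unfolding M_def Qx ..
  have ax: "xs^2 < p*(1+2*xs)"
  proof -
    have "Nn xs p / Dd xs p < 1" using Qx assms(4) unfolding Qf_def by simp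
    then have "Nn xs p < Dd xs p" using Ddx by (simp add: divide_less_eq_1_pos)
    moreover have "Dd xs p - Nn xs p = (1-xs)^2*(p+2*p*xs-xs^2)" unfolding Dd_def Nn_def by algebra
    ultimately have "(1-xs)^2*(p+2*p*xs-xs^2) > 0" by simp
    then have "p+2*p*xs-xs^2 > 0" using assms by (simp add: zero_less_mult_iff)
    moreover have "p*(1+2*xs) = p+2*p*xs" by algebra
    ultimately show ?thesis by linarith
  qed
  have adm_t: "t^2 < p*(1+2*t)" if "min p xs \<le> t" "t \<le> max p xs" for t
  proof (cases "t \<le> p")
    case True
    have "t > 0" using that assms by simp
    moreover have "t < 1" using that assms by simp
    ultimately have "t*t < t*1" by (intro mult_strict_left_mono) auto
    moreover have "p \<le> p*(1+2*t)" using \<open>t > 0\<close> assms by simp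
    ultimately show ?thesis using True by (simp add: power2_eq_square)
  next
    case False
    then have "p < t" "t \<le> xs" using that by auto
    have "(xs - t)*(xs + t - 2*p) \<ge> 0" using \<open>p < t\<close> \<open>t \<le> xs\<close> by (intro mult_nonneg_nonneg) auto
    moreover have "(xs - t)*(xs + t - 2*p) = (xs^2 - p*(1+2*xs)) - (t^2 - p*(1+2*t))" by algebra
    ultimately show ?thesis using ax by linarith
  qed
  have der: "\<exists>d. (M has_real_derivative d) (at t) \<and> (t < p \<longrightarrow> d > 0) \<and> (p < t \<longrightarrow> d < 0)"
    if "min p xs \<le> t" "t \<le> max p xs" for t
    unfolding M_def by (rule M_deriv_sign) (use assms that adm_t[OF that] in auto)
  have cont: "continuous_on {min p xs..max p xs} M"
    by (rule continuous_at_imp_continuous_on) (use der DERIV_isCont in fastforce)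
  show ?thesis
  proof (cases "xs < p")
    case True
    have "M xs < M p"
    proof (rule DERIV_pos_imp_increasing_open[OF True])
      fix t assume "xs < t" "t < p"
      then show "\<exists>y. (M has_real_derivative y) (at t) \<and> y > 0" using der[of t] True by auto
    next
      show "continuous_on {xs..p} M" using cont True by simp
    qed
    then show ?thesis using Mp Mx by simp
  next
    case False
    then have F: "p < xs" using assms by simp
    have "M p > M xs"
    proof (rule DERIV_neg_imp_decreasing_open[OF F])
      fix t assume "p < t" "t < xs"
      then show "\<exists>y. (M has_real_derivative y) (at t) \<and> y < 0" using der[of t] F by auto
    next
      show "continuous_on {p..xs} M" using cont F by simp
    qed
    then show ?thesis using Mp Mx by simp
  qed
qed


lemma s1_closed: assumes "0 \<le> l" shows "s1 l = cosh l ^ 3 / 3 - cosh l + 2/3"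
proof -
  have "(s has_integral ((cosh l ^ 3 / 3 - cosh l) - (cosh 0 ^ 3 / 3 - cosh 0))) {0..l}"
  proof (rule fundamental_theorem_of_calculus[OF assms])
    fix x assume "x \<in> {0..l}"
    have "((\<lambda>x. cosh x ^ 3 / 3 - cosh x) has_real_derivative s x) (at x within {0..l})"
    proof -
      have "((\<lambda>x. cosh x ^ 3 / 3 - cosh x) has_real_derivative (3 * cosh x ^ 2 * sinh x / 3 - sinh x)) (at x within {0..l})"
        by (rule derivative_eq_intros refl | simp)+
      moreover have "3 * cosh x ^ 2 * sinh x / 3 - sinh x = s x"
        unfolding s_def using cosh_square_eq[of x] by (simp add: algebra_simps power3_eq_cube power2_eq_square)
      ultimately show ?thesis by simp
    qed
    then show "((\<lambda>x. cosh x ^ 3 / 3 - cosh x) has_vector_derivative s x) (at x within {0..l})"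
      by (simp add: has_real_derivative_iff_has_vector_derivative)
  qed
  then show ?thesis unfolding s1_def by (simp add: integral_unique)
qed

lemma s2_closed: assumes "0 \<le> l" shows "s2 l = sinh l ^ 3 / 9 - 2 * sinh l / 3 + 2 * l / 3"
proof -
  have "integral {0..l} s1 = integral {0..l} (\<lambda>x. cosh x ^ 3 / 3 - cosh x + 2/3)"
    by (rule integral_cong) (simp add: s1_closed)
  moreover have "((\<lambda>x. cosh x ^ 3 / 3 - cosh x + 2/3) has_integral
     ((sinh l ^ 3 / 9 - 2 * sinh l / 3 + 2 * l / 3) - (sinh 0 ^ 3 / 9 - 2 * sinh 0 / 3 + 2 * 0 / 3))) {0..l}"
  proof (rule fundamental_theorem_of_calculus[OF assms])
    fix x assume "x \<in> {0..l}"
    have "((\<lambda>x. sinh x ^ 3 / 9 - 2 * sinh x / 3 + 2 * x / 3) has_real_derivative (cosh x ^ 3 / 3 - cosh x + 2/3)) (at x within {0..l})"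
    proof -
      have "((\<lambda>x. sinh x ^ 3 / 9 - 2 * sinh x / 3 + 2 * x / 3) has_real_derivative (3 * sinh x ^ 2 * cosh x / 9 - 2 * cosh x / 3 + 2/3)) (at x within {0..l})"
        by (rule derivative_eq_intros refl | simp)+
      moreover have "3 * sinh x ^ 2 * cosh x / 9 - 2 * cosh x / 3 + 2/3 = cosh x ^ 3 / 3 - cosh x + 2/3"
        using sinh_square_eq[of x] by algebra
      ultimately show ?thesis by simp
    qed
    then show "((\<lambda>x. sinh x ^ 3 / 9 - 2 * sinh x / 3 + 2 * x / 3) has_vector_derivative (cosh x ^ 3 / 3 - cosh x + 2/3)) (at x within {0..l})"
      by (simp add: has_real_derivative_iff_has_vector_derivative)
  qed
  ultimately show ?thesis unfolding s2_def by (simp add: integral_unique)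
qed


lemma Gx_hyp: assumes "p \<noteq> 0" "q \<noteq> 0" "1 - x^2 \<noteq> 0" "S = 2*x/(1-x^2)" "Cc = (1+x^2)/(1-x^2)"
  shows "Gx x p q = 2/3*(2*artanh x) + 2*S/3 - S^3/9 - S^3/(9*p*q) + (1/p + 1/q)*(Cc^3/3 - Cc + 2/3)/3"
proof -
  obtain u where hu: "u = 1 - x^2" by blast
  have u: "u \<noteq> 0" using hu assms by simp
  show ?thesis unfolding Gx_def A_def B_def C_def assms(4,5) hu[symmetric]
    using u assms(1,2) apply (simp add: field_simps)
    using hu by algebra
qed

lemma tanh_facts: fixes y :: real
  shows "1 - tanh y ^ 2 \<noteq> 0" "sinh (2*y) = 2*tanh y/(1 - tanh y^2)" "cosh (2*y) = (1 + tanh y^2)/(1 - tanh y^2)"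
proof -
  have c: "cosh y \<noteq> 0" by (metis cosh_real_pos less_irrefl)
  have "1 - tanh y ^ 2 = (cosh y ^ 2 - sinh y ^ 2) / cosh y ^ 2"
    using c by (simp add: tanh_def power_divide field_simps)
  also have "\<dots> = 1 / cosh y ^ 2" using cosh_square_eq[of y] by simp
  finally have e: "1 - tanh y ^ 2 = 1 / cosh y ^ 2" .
  show "1 - tanh y ^ 2 \<noteq> 0" unfolding e using c by simp
  show "sinh (2*y) = 2*tanh y/(1 - tanh y^2)" unfolding e sinh_double using c
    by (simp add: tanh_def field_simps power2_eq_square)
  show "cosh (2*y) = (1 + tanh y^2)/(1 - tanh y^2)" unfolding e cosh_double using c
    by (simp add: tanh_def field_simps power2_eq_square)
qed

lemma g_Gx: assumes "0 \<le> l" "tanh r \<noteq> 0" "cos \<alpha> \<noteq> 0" "cos \<beta> \<noteq> 0"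
  shows "g r l \<alpha> \<beta> = Gx (tanh (l/2)) (tanh r * cos \<alpha>) (tanh r * cos \<beta>)"
proof -
  define x where "x = tanh (l/2)"
  have ax: "artanh x = l/2" by (simp add: x_def artanh_tanh_real)
  have l2: "l = 2*(l/2)" by simp
  have hx: "1 - x^2 \<noteq> 0" unfolding x_def by (rule tanh_facts)
  have sh: "sinh l = 2*x/(1-x^2)" unfolding x_def by (subst l2, rule tanh_facts)
  have ch: "cosh l = (1+x^2)/(1-x^2)" unfolding x_def by (subst l2, rule tanh_facts)
  have "Gx x (tanh r * cos \<alpha>) (tanh r * cos \<beta>) = 2/3*(2*artanh x) + 2 * sinh l/3 - sinh l^3/9
      - sinh l^3/(9*(tanh r * cos \<alpha>)*(tanh r * cos \<beta>)) + (1/(tanh r * cos \<alpha>) + 1/(tanh r * cos \<beta>))*(cosh l^3/3 - cosh l + 2/3)/3"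
    by (rule Gx_hyp) (use assms hx sh ch in auto)
  also have "\<dots> = g r l \<alpha> \<beta>"
    unfolding g_def s_def s1_closed[OF assms(1)] s2_closed[OF assms(1)] ax
    using assms by (simp add: field_simps power2_eq_square)
  finally show ?thesis unfolding x_def by simp
qed


lemma G_deriv_pos: assumes "0 < p" "0 < q" "\<bar>y\<bar> < 1" "Rr y p q > 0"
  shows "\<exists>d. ((\<lambda>x. Gx x p q) has_real_derivative d) (at y) \<and> d > 0"
proof -
  have D: "((\<lambda>x. Gx x p q) has_real_derivative (8*Rr y p q/(3*p*q*(1-y^2)^4))) (at y)"
    by (rule Gx_deriv) (use assms in auto)
  have "y^2 < 1" using assms(3) by (simp add: abs_square_less_1)
  then have den: "3*p*q*(1-y^2)^4 > 0" using assms by simp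
  have "8*Rr y p q/(3*p*q*(1-y^2)^4) > 0" by (rule divide_pos_pos) (use assms den in auto)
  then show ?thesis using D by blast
qed

lemma G_deriv_neg: assumes "0 < p" "0 < q" "\<bar>y\<bar> < 1" "Rr y p q < 0"
  shows "\<exists>d. ((\<lambda>x. Gx x p q) has_real_derivative d) (at y) \<and> d < 0"
proof -
  have D: "((\<lambda>x. Gx x p q) has_real_derivative (8*Rr y p q/(3*p*q*(1-y^2)^4))) (at y)"
    by (rule Gx_deriv) (use assms in auto)
  have "y^2 < 1" using assms(3) by (simp add: abs_square_less_1)
  then have den: "3*p*q*(1-y^2)^4 > 0" using assms by simp
  have "8*Rr y p q/(3*p*q*(1-y^2)^4) < 0" by (rule divide_neg_pos) (use assms den in auto)
  then show ?thesis using D by blast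
qed

lemma G_cont: assumes "-1 < a" "b < 1" "0 < p" "0 < q" shows "continuous_on {a..b} (\<lambda>x. Gx x p q)"
proof (rule continuous_at_imp_continuous_on, rule ballI)
  fix y assume "y \<in> {a..b}"
  then have y: "\<bar>y\<bar> < 1" using assms by auto
  have "((\<lambda>x. Gx x p q) has_real_derivative (8*Rr y p q/(3*p*q*(1-y^2)^4))) (at y)"
    by (rule Gx_deriv) (use assms y in auto)
  then show "isCont (\<lambda>x. Gx x p q) y" by (rule DERIV_isCont)
qed

lemma part1x: assumes "0 < p" "p < 1" "0 \<le> x" "x < 1" "x \<noteq> p" shows "Gx x p p < Gx p p p"
proof (cases "x < p")
  case True
  show ?thesis
  proof (rule DERIV_pos_imp_increasing_open[OF True])
    fix y assume "x < y" "y < p"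
    then have "Rr y p p > 0" unfolding diag_factor using diag_pos[of y p] assms by (intro mult_pos_pos) auto
    then show "\<exists>d. ((\<lambda>x. Gx x p p) has_real_derivative d) (at y) \<and> d > 0"
      using G_deriv_pos assms \<open>x < y\<close> \<open>y < p\<close> by auto
  next
    show "continuous_on {x..p} (\<lambda>x. Gx x p p)" using G_cont assms by auto
  qed
next
  case False
  then have F: "p < x" using assms by simp
  show ?thesis
  proof (rule DERIV_neg_imp_decreasing_open[OF F])
    fix y assume "p < y" "y < x"
    then have "Rr y p p < 0" unfolding diag_factor using diag_pos[of y p] assms by (intro mult_neg_pos) auto
    then show "\<exists>d. ((\<lambda>x. Gx x p p) has_real_derivative d) (at y) \<and> d < 0"
      using G_deriv_neg assms \<open>p < y\<close> \<open>y < x\<close> by auto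
  next
    show "continuous_on {p..x} (\<lambda>x. Gx x p p)" using G_cont assms by auto
  qed
qed

lemma Rr_left: assumes "0 < p" "p < 1" "0 < q" "q < 1" "p \<noteq> q" "0 \<le> y" "y \<le> min p q"
  shows "Rr y p q > 0"
proof -
  have y1: "y < 1" using assms by auto
  have "y*y < 1*1" using assms y1 by (intro mult_strict_mono') auto
  then have w: "1 - y^2 > 0" by (simp add: power2_eq_square)
  have D: "Dd y p > 0" using Dd_pos assms by simp
  have t1: "y*(1-y^2)*(p-y) \<ge> 0" using assms w by simp
  have t2: "(q-y)*Dd y p \<ge> 0" using assms D by simp
  show ?thesis
  proof (cases "y < q")
    case True
    then have "(q-y)*Dd y p > 0" using D by simp
    then show ?thesis unfolding Rr_split using t1 by linarith
  next
    case False
    then have "y = q" using assms by simp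
    then have "y < p" "0 < y" using assms by auto
    then have "y*(1-y^2)*(p-y) > 0" using w by simp
    then show ?thesis unfolding Rr_split using t2 by linarith
  qed
qed

lemma Rr_right: assumes "0 < p" "p < 1" "0 < q" "q < 1" "p \<noteq> q" "max p q \<le> y" "y < 1"
  shows "Rr y p q < 0"
proof -
  have y0: "0 < y" using assms by auto
  have "y*y < 1*1" using assms y0 by (intro mult_strict_mono') auto
  then have w: "1 - y^2 > 0" by (simp add: power2_eq_square)
  have D: "Dd y p > 0" using Dd_pos assms y0 by simp
  have yw: "y*(1-y^2) > 0" using y0 w by simp
  have t1: "y*(1-y^2)*(p-y) \<le> 0" using assms yw by (simp add: mult_nonneg_nonpos)
  have t2: "(q-y)*Dd y p \<le> 0" using assms D by (simp add: mult_nonpos_nonneg)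
  show ?thesis
  proof (cases "q < y")
    case True
    then have "(q-y)*Dd y p < 0" using D by (simp add: mult_neg_pos)
    then show ?thesis unfolding Rr_split using t1 by linarith
  next
    case False
    then have "y = q" using assms by simp
    then have "p < y" using assms by auto
    then have "y*(1-y^2)*(p-y) < 0" using yw by (simp add: mult_pos_neg)
    then show ?thesis unfolding Rr_split using t2 by linarith
  qed
qed

lemma part2x: assumes "0 < p" "p < 1" "0 < q" "q < 1" "p \<noteq> q"
  shows "\<exists>xs. 0 < xs \<and> xs < 1 \<and> Rr xs p q = 0 \<and> xs \<noteq> p \<and> (\<forall>x. 0 \<le> x \<and> x < 1 \<longrightarrow> Gx x p q \<le> Gx xs p q)"
proof -
  define a where "a = min p q"
  define b where "b = max p q"
  define G where "G = (\<lambda>x. Gx x p q)"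
  have ab: "0 < a" "a < b" "b < 1" "a \<le> p" "p \<le> b" "p = a \<or> p = b"
    using assms unfolding a_def b_def by auto
  have cab: "continuous_on {a..b} G" unfolding G_def using G_cont ab assms by auto
  obtain xs where xs: "xs \<in> {a..b}" "\<forall>y\<in>{a..b}. G y \<le> G xs"
    using continuous_attains_sup[OF compact_Icc _ cab] ab by auto
  have Ra: "Rr a p q > 0" by (intro Rr_left assms) (use ab in \<open>auto simp: a_def\<close>)
  have Rb: "Rr b p q < 0" by (intro Rr_right assms) (use ab in \<open>auto simp: b_def\<close>)
  have xa: "xs \<noteq> a"
  proof
    assume "xs = a"
    obtain d where d: "(G has_real_derivative d) (at a)" "d > 0"
      using G_deriv_pos[of p q a] Ra assms ab unfolding G_def by force
    obtain e where e: "e > 0" "\<forall>h>0. h < e \<longrightarrow> G a < G (a + h)" using DERIV_pos_inc_right[OF d] by auto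
    define h where "h = min (e/2) (b - a)"
    have "h > 0" "h < e" "a + h \<in> {a..b}" using e ab unfolding h_def by auto
    then have "G a < G (a+h)" using e by auto
    moreover have "G (a+h) \<le> G xs" using xs \<open>a + h \<in> {a..b}\<close> by auto
    ultimately show False using \<open>xs = a\<close> by simp
  qed
  have xb: "xs \<noteq> b"
  proof
    assume "xs = b"
    obtain d where d: "(G has_real_derivative d) (at b)" "d < 0"
      using G_deriv_neg[of p q b] Rb assms ab unfolding G_def by force
    obtain e where e: "e > 0" "\<forall>h>0. h < e \<longrightarrow> G b < G (b - h)" using DERIV_neg_dec_left[OF d] by auto
    define h where "h = min (e/2) (b - a)"
    have "h > 0" "h < e" "b - h \<in> {a..b}" using e ab unfolding h_def by auto
    then have "G b < G (b-h)" using e by auto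
    moreover have "G (b-h) \<le> G xs" using xs \<open>b - h \<in> {a..b}\<close> by auto
    ultimately show False using \<open>xs = b\<close> by simp
  qed
  have xin: "a < xs" "xs < b" using xs xa xb by auto
  have R0: "Rr xs p q = 0"
  proof -
    have "\<bar>xs\<bar> < 1" using xin ab by auto
    then have D: "(G has_real_derivative (8*Rr xs p q/(3*p*q*(1-xs^2)^4))) (at xs)"
      unfolding G_def using Gx_deriv assms by auto
    have "8*Rr xs p q/(3*p*q*(1-xs^2)^4) = 0"
    proof (rule DERIV_local_max[OF D])
      show "0 < min (xs - a) (b - xs)" using xin by simp
      show "\<forall>y. \<bar>xs - y\<bar> < min (xs - a) (b - xs) \<longrightarrow> G y \<le> G xs"
      proof (intro allI impI)
        fix y assume "\<bar>xs - y\<bar> < min (xs - a) (b - xs)"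
        then have "y \<in> {a..b}" by (auto simp: abs_less_iff)
        then show "G y \<le> G xs" using xs(2) by blast
      qed
    qed
    moreover have "xs*xs < 1*1" using xin ab by (intro mult_strict_mono') auto
    then have "3*p*q*(1-xs^2)^4 \<noteq> 0" using assms by (simp add: power2_eq_square)
    ultimately show ?thesis by simp
  qed
  have glob: "G x \<le> G xs" if "0 \<le> x" "x < 1" for x
  proof -
    consider "x < a" | "x \<in> {a..b}" | "b < x" by force
    then show ?thesis
    proof cases
      case 1
      have "G x < G a"
      proof (rule DERIV_pos_imp_increasing_open[OF 1])
        fix y assume "x < y" "y < a"
        then have "Rr y p q > 0" by (intro Rr_left assms) (use that \<open>x < y\<close> \<open>y < a\<close> in \<open>auto simp: a_def\<close>)
        then show "\<exists>d. (G has_real_derivative d) (at y) \<and> d > 0"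
          unfolding G_def using G_deriv_pos assms \<open>x < y\<close> \<open>y < a\<close> ab that by auto
      next
        show "continuous_on {x..a} G" unfolding G_def using G_cont assms that ab by auto
      qed
      moreover have "G a \<le> G xs" using xs ab by auto
      ultimately show ?thesis by simp
    next
      case 2 then show ?thesis using xs by auto
    next
      case 3
      have "G b > G x"
      proof (rule DERIV_neg_imp_decreasing_open[OF 3])
        fix y assume "b < y" "y < x"
        then have "Rr y p q < 0" by (intro Rr_right assms) (use that \<open>b < y\<close> \<open>y < x\<close> in \<open>auto simp: b_def\<close>)
        then show "\<exists>d. (G has_real_derivative d) (at y) \<and> d < 0"
          unfolding G_def using G_deriv_neg assms \<open>b < y\<close> \<open>y < x\<close> ab that by auto
      next
        show "continuous_on {b..x} G" unfolding G_def using G_cont assms that ab by auto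
      qed
      moreover have "G b \<le> G xs" using xs ab by auto
      ultimately show ?thesis by simp
    qed
  qed
  have "xs \<noteq> p" using ab xa xb by auto
  moreover have "0 < xs" "xs < 1" using xin ab by auto
  moreover have "\<forall>x. 0 \<le> x \<and> x < 1 \<longrightarrow> Gx x p q \<le> Gx xs p q" using glob unfolding G_def by blast
  ultimately show ?thesis using R0 by blast
qed


lemma tanh_artanh: fixes p :: real assumes "\<bar>p\<bar> < 1" shows "tanh (artanh p) = p"
proof -
  have z: "(1+p)/(1-p) > 0" using assms by (simp add: abs_less_iff)
  have "exp (- 2 * artanh p) = exp (- ln ((1+p)/(1-p)))" unfolding artanh_def by simp
  also have "\<dots> = 1 / ((1+p)/(1-p))" using z by (simp add: exp_minus exp_ln inverse_eq_divide)
  finally have e: "exp (- 2 * artanh p) = (1-p)/(1+p)" by simp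
  have "1 + p \<noteq> 0" "1 - p \<noteq> 0" using assms by (auto simp: abs_less_iff)
  then show ?thesis unfolding tanh_real_altdef e by (simp add: field_simps)
qed

lemma artanh_nonneg: fixes p :: real assumes "0 \<le> p" "p < 1" shows "artanh p \<ge> 0"
proof -
  have "(1+p)/(1-p) \<ge> 1" using assms by (simp add: le_divide_eq)
  then show ?thesis unfolding artanh_def by simp
qed

lemma f_max: assumes "ls \<ge> 0" "\<And>l. l \<ge> 0 \<Longrightarrow> g r l \<alpha> \<beta> \<le> g r ls \<alpha> \<beta>"
  shows "f r \<alpha> \<beta> = g r ls \<alpha> \<beta>"
  unfolding f_def by (rule cSup_eq_maximum) (use assms in auto)

theorem lemma5:
  fixes r :: real
  assumes "r > 0"
  shows "(\<forall>\<alpha>\<in>{0..<pi/2}. \<forall>l\<in>{0..}.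
            l \<noteq> 2 * artanh (tanh r * cos \<alpha>) \<longrightarrow>
              g r l \<alpha> \<alpha> < g r (2 * artanh (tanh r * cos \<alpha>)) \<alpha> \<alpha>)
       \<and> (\<forall>\<alpha>\<in>{0..<pi/2}. \<forall>\<beta>\<in>{0..<pi/2}.
            f r \<alpha> \<beta> \<le> (f r \<alpha> \<alpha> + f r \<beta> \<beta>) / 2
            \<and> (f r \<alpha> \<beta> = (f r \<alpha> \<alpha> + f r \<beta> \<beta>) / 2 \<longrightarrow> \<alpha> = \<beta>))"
proof -
  have tr: "0 < tanh r" "tanh r < 1" using assms by (auto simp: tanh_real_lt_1)
  have cpos: "0 < cos a" "cos a \<le> 1" if "a \<in> {0..<pi/2}" for a
    using that by (auto intro: cos_gt_zero_pi)
  have Pb: "0 < tanh r * cos a" "tanh r * cos a < 1" if "a \<in> {0..<pi/2}" for a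
  proof -
    show "0 < tanh r * cos a" using tr cpos[OF that] by simp
    have "tanh r * cos a \<le> tanh r * 1" using tr cpos[OF that] by (intro mult_left_mono) auto
    then show "tanh r * cos a < 1" using tr by linarith
  qed
  have gG: "g r l a b = Gx (tanh (l/2)) (tanh r * cos a) (tanh r * cos b)"
    if "a \<in> {0..<pi/2}" "b \<in> {0..<pi/2}" "0 \<le> l" for a b l
    by (rule g_Gx) (use that tr cpos[OF that(1)] cpos[OF that(2)] in auto)
  have xb: "0 \<le> tanh (l/2)" "tanh (l/2) < 1" if "0 \<le> l" for l :: real
    using that by (auto simp: tanh_real_lt_1)
  have l0: "2 * artanh (tanh r * cos a) \<ge> 0" "tanh (2 * artanh (tanh r * cos a) / 2) = tanh r * cos a"
    if "a \<in> {0..<pi/2}" for a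
  proof -
    show "2 * artanh (tanh r * cos a) \<ge> 0" using artanh_nonneg Pb[OF that] by simp
    show "tanh (2 * artanh (tanh r * cos a) / 2) = tanh r * cos a"
      using tanh_artanh Pb[OF that] by simp
  qed
  have part1: "g r l a a < g r (2 * artanh (tanh r * cos a)) a a"
    if a: "a \<in> {0..<pi/2}" and l: "0 \<le> l" "l \<noteq> 2 * artanh (tanh r * cos a)" for a l
  proof -
    define p where "p = tanh r * cos a"
    have ne: "tanh (l/2) \<noteq> p"
    proof
      assume "tanh (l/2) = p"
      then have "artanh (tanh (l/2)) = artanh p" by simp
      then have "l/2 = artanh p" by (simp add: artanh_tanh_real)
      then show False using l(2) unfolding p_def by simp
    qed
    have "g r l a a = Gx (tanh (l/2)) p p" using gG a l unfolding p_def by simp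
    also have "\<dots> < Gx p p p" using part1x[of p "tanh (l/2)"] Pb[OF a] xb[OF l(1)] ne unfolding p_def by simp
    also have "Gx p p p = g r (2 * artanh (tanh r * cos a)) a a"
      using gG[OF a a l0(1)[OF a]] l0(2)[OF a] unfolding p_def by simp
    finally show ?thesis .
  qed
  have fdiag: "f r a a = Psi (tanh r * cos a)" if a: "a \<in> {0..<pi/2}" for a
  proof -
    have "f r a a = g r (2 * artanh (tanh r * cos a)) a a"
    proof (rule f_max)
      show "0 \<le> 2 * artanh (tanh r * cos a)" by (rule l0(1)[OF a])
      fix l :: real assume "0 \<le> l"
      then show "g r l a a \<le> g r (2 * artanh (tanh r * cos a)) a a"
        using part1[OF a] by (cases "l = 2 * artanh (tanh r * cos a)") (auto intro: less_imp_le)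
    qed
    also have "\<dots> = Gx (tanh r * cos a) (tanh r * cos a) (tanh r * cos a)"
      using gG[OF a a l0(1)[OF a]] l0(2)[OF a] by simp
    also have "\<dots> = Psi (tanh r * cos a)" using Gx_diag Pb[OF a] by simp
    finally show ?thesis .
  qed
  have foff: "f r a b < (Psi (tanh r * cos a) + Psi (tanh r * cos b))/2"
    if a: "a \<in> {0..<pi/2}" and b: "b \<in> {0..<pi/2}" and ab: "a \<noteq> b" for a b
  proof -
    define p where "p = tanh r * cos a"
    define q where "q = tanh r * cos b"
    have pq: "p \<noteq> q"
    proof
      assume "p = q"
      then have "cos a = cos b" using tr unfolding p_def q_def by simp
      moreover have "0 \<le> a" "a \<le> pi" "0 \<le> b" "b \<le> pi" using a b pi_gt_zero by auto
      ultimately have "a = b" using cos_inj_pi by blast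
      then show False using ab by simp
    qed
    have pb: "0 < p" "p < 1" "0 < q" "q < 1" using Pb[OF a] Pb[OF b] unfolding p_def q_def by auto
    obtain xs where xs0: "0 < xs \<and> xs < 1 \<and> Rr xs p q = 0 \<and> xs \<noteq> p \<and>
      (\<forall>x. 0 \<le> x \<and> x < 1 \<longrightarrow> Gx x p q \<le> Gx xs p q)"
      using part2x[OF pb pq] by (rule exE)
    have xs: "0 < xs" "xs < 1" "Rr xs p q = 0" "xs \<noteq> p"
      "\<forall>x. 0 \<le> x \<and> x < 1 \<longrightarrow> Gx x p q \<le> Gx xs p q"
      using xs0 by simp_all
    have ls: "2 * artanh xs \<ge> 0" "tanh (2 * artanh xs / 2) = xs"
      using artanh_nonneg[of xs] tanh_artanh[of xs] xs by auto
    have "f r a b = g r (2 * artanh xs) a b"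
    proof (rule f_max)
      show "0 \<le> 2 * artanh xs" by (rule ls(1))
      fix l :: real assume l: "0 \<le> l"
      have "g r l a b = Gx (tanh (l/2)) p q" using gG[OF a b l] unfolding p_def q_def .
      also have "\<dots> \<le> Gx xs p q" using xs(5) xb[OF l] by blast
      also have "\<dots> = g r (2 * artanh xs) a b" using gG[OF a b ls(1)] ls(2) unfolding p_def q_def by simp
      finally show "g r l a b \<le> g r (2 * artanh xs) a b" .
    qed
    also have "\<dots> = Gx xs p q" using gG[OF a b ls(1)] ls(2) unfolding p_def q_def by simp
    also have "\<dots> < (Psi p + Psi q)/2" by (rule curve) (use pb xs in auto)
    finally show ?thesis unfolding p_def q_def .
  qed
  show ?thesis
  proof (intro conjI ballI impI)
    fix a l assume "a \<in> {0..<pi/2}" "l \<in> {0::real..}" "l \<noteq> 2 * artanh (tanh r * cos a)"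
    then show "g r l a a < g r (2 * artanh (tanh r * cos a)) a a" using part1 by auto
  next
    fix a b assume a: "a \<in> {0..<pi/2}" and b: "b \<in> {0..<pi/2}"
    show "f r a b \<le> (f r a a + f r b b) / 2"
    proof (cases "a = b")
      case True then show ?thesis by simp
    next
      case False then show ?thesis using foff[OF a b False] fdiag[OF a] fdiag[OF b] by simp
    qed
  next
    fix a b assume a: "a \<in> {0..<pi/2}" and b: "b \<in> {0..<pi/2}"
      and eq: "f r a b = (f r a a + f r b b) / 2"
    show "a = b"
    proof (rule ccontr)
      assume "a \<noteq> b"
      then show False using foff[OF a b] fdiag[OF a] fdiag[OF b] eq by simp
    qed
  qed
qed

end
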